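(* Let $b\geq 2$ be an integer. For Lebesgue almost every angle $\alpha\in\mathbb{T}$ the following two properties hold simultaneously: (1) for every point $\xi\in\alpha+K$, one has $0\leq v_b(\xi)\leq\frac{\kappa}{1-\kappa}$; (2) for every real number $v\in[0,\kappa/(1-\kappa)]$, one has $\dim_H(\mathcal{V}_b(v)\cap(\alpha+K))\leq\frac{1}{v+1}+\kappa-1$.
   Context: $\mathbb{T}=\mathbb{R}/\mathbb{Z}$ is the circle, identified with $[0,1)$. $K$ denotes the image in $\mathbb{T}$ of the middle-third Cantor set $\{\sum_{i\ge1}a_i3^{-i}: a_i\in\{0,2\}\}$, and $\kappa=\log 2/\log 3$; $\alpha+K$ is the rotation of $K$ by $\alpha$. For an irrational real $\xi$, $v_b(\xi)=\sup\{v\in\mathbb{R}: \|b^j\xi\|<b^{-vj}\text{ for infinitely many }j\in\mathbb{N}\}$, where $\|\cdot\|$ is the distance to the nearest integer; for rational $\xi$, $v_b(\xi)=0$ (this is 1-periodic, hence defined on $\mathbb{T}$). For $v\ge0$, $\mathcal{V}_b(v)=\{\xi\in\mathbb{T}: v_b(\xi)\geq v\}$. $\dim_H$ is Hausdorff dimension, with $\dim_H\emptyset=-\infty$. *)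

theory Defs
  imports "HOL-Analysis.Analysis"
begin

definition dist_int :: "real \<Rightarrow> real" where
  "dist_int x = \<bar>x - of_int (round x)\<bar>"

text \<open>The circle T = R/Z is identified with [0,1); reduction is frac.\<close>
definition circle :: "real set" where
  "circle = {0..<1}"

definition cantor_set :: "real set" where
  "cantor_set = {(\<Sum>i. a i / 3 ^ (Suc i)) | a :: nat \<Rightarrow> real. \<forall>i. a i \<in> {0, 2}}"

definition cantorK :: "real set" where
  "cantorK = frac ` cantor_set"

definition kappa :: real where
  "kappa = ln 2 / ln 3"

definition rotate :: "real \<Rightarrow> real set \<Rightarrow> real set" where
  "rotate \<alpha> A = (\<lambda>x. frac (\<alpha> + x)) ` A"

definition vb :: "nat \<Rightarrow> real \<Rightarrow> ereal" where
  "vb b \<xi> = (if \<xi> \<in> \<rat> then 0 else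
     Sup {ereal v | v. infinite {j :: nat. dist_int (real b ^ j * \<xi>) < real b powr (- v * real j)}})"

definition Vb :: "nat \<Rightarrow> real \<Rightarrow> real set" where
  "Vb b v = {\<xi> \<in> circle. vb b \<xi> \<ge> ereal v}"

definition hausdorff_pre :: "real \<Rightarrow> real \<Rightarrow> real set \<Rightarrow> ennreal" where
  "hausdorff_pre s \<delta> E = Inf {(\<Sum>i. ennreal (diameter (U i) powr s)) | U :: nat \<Rightarrow> real set.
       E \<subseteq> (\<Union>i. U i) \<and> (\<forall>i. bounded (U i) \<and> diameter (U i) \<le> \<delta>)}"

definition hausdorff_measure :: "real \<Rightarrow> real set \<Rightarrow> ennreal" where
  "hausdorff_measure s E = (SUP \<delta>\<in>{0<..}. hausdorff_pre s \<delta> E)"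

text \<open>Hausdorff dimension, with dim of the empty set = -infinity.
  Only s > 0 is used (for s > 0 the convention 0 powr s = 0 is the correct one).\<close>
definition hausdorff_dim :: "real set \<Rightarrow> ereal" where
  "hausdorff_dim E = (if E = {} then - \<infinity>
     else Inf {ereal s | s. 0 < s \<and> hausdorff_measure s E = 0})"

end

theory Submission
  imports Defs "HOL-Library.Nat_Bijection"
begin

lemma dist_int_le_half: "dist_int x \<le> 1/2"
  unfolding dist_int_def using of_int_round_abs_le[of x] by linarith

lemma dist_int_nonneg: "0 \<le> dist_int x"
  unfolding dist_int_def by simp

lemma dist_int_le_int: "dist_int x \<le> \<bar>x - of_int p\<bar>"
proof (cases "\<bar>x - of_int p\<bar> < 1/2")
  case True
  have "\<bar>of_int p - of_int (round x)\<bar> < (1::real)"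
    using True of_int_round_abs_le[of x] by linarith
  hence "\<bar>p - round x\<bar> < 1" by linarith
  hence "p = round x" by linarith
  thus ?thesis unfolding dist_int_def by simp
next
  case False thus ?thesis using dist_int_le_half[of x] by linarith
qed

lemma dist_int_lip: "dist_int a \<le> dist_int b + \<bar>a - b\<bar>"
proof -
  have "dist_int a \<le> \<bar>a - of_int (round b)\<bar>" by (rule dist_int_le_int)
  also have "\<dots> \<le> \<bar>a - b\<bar> + dist_int b" unfolding dist_int_def by linarith
  finally show ?thesis by simp
qed

lemma dist_int_shift: "dist_int (x + of_int k) = dist_int x"
proof -
  have "dist_int (x + of_int k) \<le> dist_int x"
    using dist_int_le_int[of "x + of_int k" "round x + k"] unfolding dist_int_def by simp
  moreover have "dist_int x \<le> dist_int (x + of_int k)"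
    using dist_int_le_int[of x "round (x + of_int k) - k"] unfolding dist_int_def by simp
  ultimately show ?thesis by simp
qed

fun cpt :: "nat \<Rightarrow> nat \<Rightarrow> real" where
  "cpt 0 m = 0"
| "cpt (Suc n) m = cpt n (m div 2) + (if odd m then 2 / 3 ^ Suc n else 0)"

lemma cantor_prefix:
  assumes a: "\<forall>i. a i \<in> {0, 2::real}"
  shows "\<exists>m < 2^n. cpt n m = (\<Sum>i<n. a i / 3 ^ Suc i)"
proof (induction n)
  case 0 thus ?case by simp
next
  case (Suc n)
  then obtain m where m: "m < 2^n" "cpt n m = (\<Sum>i<n. a i / 3 ^ Suc i)" by auto
  define m' where "m' = 2*m + (if a n = 2 then 1 else 0)"
  have "m' < 2 ^ Suc n" using m(1) unfolding m'_def by auto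
  moreover have "m' div 2 = m" unfolding m'_def by auto
  moreover have "odd m' \<longleftrightarrow> a n = 2" unfolding m'_def by auto
  ultimately show ?case using m(2) a[rule_format, of n]
    by (intro exI[of _ m']) auto
qed

lemma cantor_cover:
  assumes "x \<in> cantor_set"
  shows "\<exists>m < 2^n. cpt n m \<le> x \<and> x \<le> cpt n m + (1/3)^n"
proof -
  obtain a where a: "\<forall>i. a i \<in> {0, 2::real}" and x: "x = (\<Sum>i. a i / 3 ^ Suc i)"
    using assms unfolding cantor_set_def by auto
  have nn: "\<And>i. 0 \<le> a i / 3 ^ Suc i"
  proof -
    fix i have "0 \<le> a i" using a[rule_format, of i] by auto
    thus "0 \<le> a i / 3 ^ Suc i" by simp
  qed
  have le: "\<And>i. a i / 3 ^ Suc i \<le> 2 / 3 ^ Suc i"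
  proof -
    fix i have "a i \<le> 2" using a[rule_format, of i] by auto
    thus "a i / 3 ^ Suc i \<le> 2 / 3 ^ Suc i" by (simp add: divide_right_mono)
  qed
  have sg: "summable (\<lambda>i. 2 / (3::real) ^ Suc i)"
  proof -
    have "(\<lambda>i. 2 / (3::real) ^ Suc i) = (\<lambda>i. (2/3) * (1/3)^i)"
      by (auto simp: power_divide field_simps)
    moreover have "summable (\<lambda>i. (2/3) * (1/3::real)^i)"
      by (intro summable_mult summable_geometric) auto
    ultimately show ?thesis by simp
  qed
  have sa: "summable (\<lambda>i. a i / 3 ^ Suc i)"
    by (rule summable_comparison_test'[OF sg, of 0]) (metis nn le abs_of_nonneg real_norm_def)
  obtain m where m: "m < 2^n" "cpt n m = (\<Sum>i<n. a i / 3 ^ Suc i)" using cantor_prefix[OF a] by blast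
  have split: "x = cpt n m + (\<Sum>i. a (i + n) / 3 ^ Suc (i + n))"
    using suminf_split_initial_segment[OF sa, of n] m(2) x by simp
  have t0: "0 \<le> (\<Sum>i. a (i + n) / 3 ^ Suc (i + n))"
    using nn by (intro suminf_nonneg summable_ignore_initial_segment[OF sa]) auto
  have "(\<Sum>i. a (i + n) / 3 ^ Suc (i + n)) \<le> (\<Sum>i. 2 / 3 ^ Suc (i + n))"
    using le by (intro suminf_le summable_ignore_initial_segment[OF sa] summable_ignore_initial_segment[OF sg]) auto
  also have "(\<Sum>i. 2 / (3::real) ^ Suc (i + n)) = (1/3)^n"
  proof -
    have "(\<lambda>i. 2 / (3::real) ^ Suc (i + n)) = (\<lambda>i. (2/3) * (1/3)^n * (1/3)^i)"
      by (auto simp: power_add power_divide field_simps)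
    moreover have "(\<lambda>i. (2/3) * (1/3)^n * (1/3::real)^i) sums ((2/3) * (1/3)^n * (1 / (1 - 1/3)))"
      by (intro sums_mult geometric_sums) auto
    ultimately show ?thesis by (auto simp: sums_iff)
  qed
  finally show ?thesis using m(1) split t0 by (intro exI[of _ m]) auto
qed

definition nn :: "nat \<Rightarrow> real \<Rightarrow> nat \<Rightarrow> nat" where
  "nn b w j = nat \<lceil>(1+w) * ln (real b) / ln 3 * real j\<rceil>"
definition hh :: "nat \<Rightarrow> real \<Rightarrow> nat \<Rightarrow> real" where
  "hh b w j = (1/3) ^ nn b w j"
definition rho :: "nat \<Rightarrow> real \<Rightarrow> nat \<Rightarrow> real" where
  "rho b w j = real b powr (- w * real j) + real b ^ j * hh b w j"
definition Pset :: "nat \<Rightarrow> real \<Rightarrow> nat \<Rightarrow> nat \<Rightarrow> int set" where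
  "Pset b w j m = {\<lfloor>real b ^ j * cpt (nn b w j) m\<rfloor> - 1 .. \<lfloor>real b ^ j * cpt (nn b w j) m\<rfloor> + int (b ^ j) + 1}"
definition Gs :: "nat \<Rightarrow> real \<Rightarrow> nat \<Rightarrow> nat \<Rightarrow> real set" where
  "Gs b w j m = {0..<1} \<inter> (\<Union>p\<in>Pset b w j m.
     {(of_int p - rho b w j) / real b ^ j - cpt (nn b w j) m <..< (of_int p + rho b w j) / real b ^ j - cpt (nn b w j) m})"
definition ff :: "nat \<Rightarrow> real \<Rightarrow> real \<Rightarrow> nat \<Rightarrow> real \<Rightarrow> real" where
  "ff b w s j \<alpha> = (\<Sum>m<2 ^ nn b w j. indicator (Gs b w j m) \<alpha> * hh b w j powr s)"

lemma hh_pos: "0 < hh b w j" unfolding hh_def by simp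

lemma rho_pos: "b \<ge> 1 \<Longrightarrow> 0 < rho b w j"
  unfolding rho_def using hh_pos[of b w j] by (intro add_pos_nonneg) auto

lemma ff_nonneg: "0 \<le> ff b w s j \<alpha>"
  unfolding ff_def by (intro sum_nonneg) auto

lemma Gs_sets: "Gs b w j m \<in> sets borel"
  proof -
  have "{0..<1::real} \<in> sets borel" by simp
  moreover have "(\<Union>p\<in>Pset b w j m.
     {(of_int p - rho b w j) / real b ^ j - cpt (nn b w j) m <..< (of_int p + rho b w j) / real b ^ j - cpt (nn b w j) m}) \<in> sets borel"
    by (intro borel_open open_UN) auto
  ultimately show ?thesis unfolding Gs_def by (rule sets.Int)
qed

lemma mem_Gs:
  assumes b: "b \<ge> 1" and a: "0 \<le> \<alpha>" "\<alpha> < 1"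
    and cx: "cpt (nn b w j) m \<le> x" "x \<le> cpt (nn b w j) m + hh b w j"
    and d: "dist_int (real b ^ j * (\<alpha> + x)) < real b powr (- w * real j)"
  shows "\<alpha> \<in> Gs b w j m"
proof -
  define c where "c = cpt (nn b w j) m"
  define B where "B = real b ^ j"
  have B1: "B \<ge> 1" unfolding B_def using b by simp
  define y where "y = B * (\<alpha> + c)"
  have "dist_int y \<le> dist_int (B * (\<alpha> + x)) + \<bar>y - B * (\<alpha> + x)\<bar>" by (rule dist_int_lip)
  also have "\<bar>y - B * (\<alpha> + x)\<bar> = B * (x - c)" unfolding y_def using cx B1 by (simp add: c_def algebra_simps)
  also have "B * (x - c) \<le> B * hh b w j" using cx B1 by (intro mult_left_mono) (auto simp: c_def)
  finally have dy: "dist_int y < rho b w j" using d unfolding rho_def B_def by simp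
  define p where "p = round y"
  have py: "\<bar>y - of_int p\<bar> < rho b w j" using dy unfolding dist_int_def p_def .
  have y1: "B * c \<le> y" "y < B * c + B" unfolding y_def using a B1 by (auto simp: algebra_simps)
  have "of_int p \<ge> y - 1/2" unfolding p_def by (rule of_int_round_ge)
  hence p1: "p \<ge> \<lfloor>B * c\<rfloor> - 1" using y1 floor_le_iff[of "B*c" "p+1"] by linarith
  have "of_int p \<le> y + 1/2" unfolding p_def by (rule of_int_round_le)
  moreover have "B = real (b ^ j)" unfolding B_def by simp
  ultimately have p2: "p \<le> \<lfloor>B * c\<rfloor> + int (b ^ j) + 1"
    using y1 le_floor_iff[of "p - int (b^j) - 1" "B*c"] by (simp; linarith)
  have pP: "p \<in> Pset b w j m" using p1 p2 unfolding Pset_def B_def c_def by auto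
  have "(of_int p - rho b w j) / B - c < \<alpha>" "\<alpha> < (of_int p + rho b w j) / B - c"
    using py B1 unfolding y_def by (auto simp: field_simps abs_less_iff)
  thus ?thesis using pP a unfolding Gs_def B_def c_def by auto
qed

lemma meas_Gs:
  assumes b: "b \<ge> 1"
  shows "emeasure lborel (Gs b w j m) \<le> ennreal (8 * rho b w j)"
proof -
  define c where "c = cpt (nn b w j) m"
  define B where "B = real b ^ j"
  define r where "r = rho b w j"
  have B1: "B \<ge> 1" unfolding B_def using b by simp
  have r0: "r > 0" unfolding r_def using rho_pos[OF b] .
  define I where "I = (\<lambda>p::int. {(of_int p - r) / B - c <..< (of_int p + r) / B - c})"
  have "Gs b w j m \<subseteq> (\<Union>p\<in>Pset b w j m. I p)" unfolding Gs_def I_def B_def c_def r_def by auto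
  hence "emeasure lborel (Gs b w j m) \<le> emeasure lborel (\<Union>p\<in>Pset b w j m. I p)"
    by (intro emeasure_mono) (auto simp: I_def)
  also have "\<dots> \<le> (\<Sum>p\<in>Pset b w j m. emeasure lborel (I p))"
    by (intro emeasure_subadditive_finite) (auto simp: Pset_def I_def)
  also have "\<dots> = (\<Sum>p\<in>Pset b w j m. ennreal (2 * r / B))"
  proof (intro sum.cong refl)
    fix p assume "p \<in> Pset b w j m"
    have "(of_int p - r) / B - c \<le> (of_int p + r) / B - c" using r0 B1 by (simp add: divide_right_mono)
    hence "emeasure lborel (I p) = ennreal (((of_int p + r) / B - c) - ((of_int p - r) / B - c))"
      unfolding I_def by simp
    also have "((of_int p + r) / B - c) - ((of_int p - r) / B - c) = 2 * r / B" using B1 by (simp add: field_simps)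
    finally show "emeasure lborel (I p) = ennreal (2 * r / B)" .
  qed
  also have "\<dots> = ennreal (real (card (Pset b w j m)) * (2 * r / B))"
    using r0 B1 by (simp add: ennreal_of_nat_eq_real_of_nat ennreal_mult[symmetric] del: times_divide_eq_right)
  also have "real (card (Pset b w j m)) = B + 3"
    unfolding Pset_def B_def by simp
  also have "(B + 3) * (2 * r / B) \<le> 8 * r"
  proof -
    have "(B + 3) * (2 * r / B) = 2 * r + 6 * r / B" using B1 by (simp add: field_simps)
    also have "6 * r / B \<le> 6 * r" using B1 r0 by (simp add: divide_le_eq)
    finally show ?thesis by simp
  qed
  finally show ?thesis unfolding r_def by (simp add: ennreal_leI order_trans)
qed

lemma kappa_bounds: "0 < kappa" "kappa < 1"
  unfolding kappa_def by (auto simp: divide_less_eq)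

lemma exp_bound:
  assumes b: "b \<ge> 2" and w: "w > -1" and s: "s \<ge> 0"
  shows "real (2 ^ nn b w j) * hh b w j powr s * (8 * rho b w j)
     \<le> 32 * (real b powr ((1+w)*(kappa - s) - w)) ^ j"
proof -
  define lb where "lb = ln (real b)"
  have lb: "lb > 0" unfolding lb_def using b by simp
  have l3: "ln (3::real) > 0" by simp
  define t where "t = (1+w) * lb / ln 3 * real j"
  have t0: "t \<ge> 0" unfolding t_def using w lb by simp
  define n where "n = nn b w j"
  have nt: "real n \<ge> t" "real n \<le> t + 1"
  proof -
    have e: "real n = of_int \<lceil>t\<rceil>"
      unfolding n_def nn_def t_def[symmetric] lb_def[symmetric] using t0 by simp
    show "real n \<ge> t" "real n \<le> t + 1" unfolding e using ceiling_correct[of t] by linarith+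
  qed
  have bp: "\<And>y. real b powr y = exp (y * lb)" unfolding lb_def powr_def using b by simp
  have hh: "hh b w j = exp (- real n * ln 3)"
  proof -
    have "exp (real n * ln 3) = (3::real) ^ n" by (simp add: exp_of_nat_mult)
    thus ?thesis unfolding hh_def n_def[symmetric] by (simp add: exp_minus power_divide inverse_eq_divide)
  qed
  have h1: "hh b w j \<le> exp (- ((1+w) * real j * lb))"
  proof -
    have "- real n * ln 3 \<le> - t * ln 3" using nt l3 by (intro mult_right_mono) auto
    also have "- t * ln 3 = - ((1+w) * real j * lb)" unfolding t_def using l3 by (simp add: field_simps)
    finally show ?thesis unfolding hh by simp
  qed
  have bj: "real b ^ j = exp (real j * lb)" unfolding lb_def using b by (simp add: exp_of_nat_mult)
  have "real b ^ j * hh b w j \<le> exp (real j * lb) * exp (- ((1+w) * real j * lb))"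
    unfolding bj using h1 by (intro mult_left_mono) auto
  also have "\<dots> = exp (- w * real j * lb)" by (simp add: exp_add[symmetric] algebra_simps)
  finally have "rho b w j \<le> 2 * exp (- w * real j * lb)" unfolding rho_def bp by simp
  hence r: "8 * rho b w j \<le> 16 * exp (- w * real j * lb)" by simp
  have hs: "hh b w j powr s \<le> exp (- ((1+w) * real j * lb)) powr s"
    using h1 s hh_pos[of b w j] by (intro powr_mono2) auto
  also have "\<dots> = exp (- ((1+w) * real j * lb) * s)" by (simp add: powr_def)
  finally have hs: "hh b w j powr s \<le> exp (- ((1+w) * real j * lb) * s)" .
  have "real (2 ^ n) = exp (real n * ln 2)" by (simp add: exp_of_nat_mult)
  also have "\<dots> \<le> exp ((t + 1) * ln 2)" using nt by (intro exp_mono mult_right_mono) auto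
  also have "(t + 1) * ln 2 = ln 2 + (1+w) * kappa * real j * lb" unfolding t_def kappa_def by (simp add: field_simps)
  finally have tw: "real (2 ^ n) \<le> 2 * exp ((1+w) * kappa * real j * lb)" by (simp add: exp_add)
  have "real (2 ^ n) * hh b w j powr s * (8 * rho b w j)
      \<le> (2 * exp ((1+w) * kappa * real j * lb)) * exp (- ((1+w) * real j * lb) * s) * (16 * exp (- w * real j * lb))"
  proof (rule mult_mono)
    show "real (2 ^ n) * hh b w j powr s \<le> (2 * exp ((1+w) * kappa * real j * lb)) * exp (- ((1+w) * real j * lb) * s)"
      by (rule mult_mono[OF tw hs]) auto
    show "8 * rho b w j \<le> 16 * exp (- w * real j * lb)" by (rule r)
    show "0 \<le> 8 * rho b w j" using rho_pos[of b w j] b by simp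
  qed auto
  also have "\<dots> = 32 * exp (((1+w)*(kappa - s) - w) * real j * lb)"
    by (simp add: exp_add[symmetric] algebra_simps)
  also have "exp (((1+w)*(kappa - s) - w) * real j * lb) = (real b powr ((1+w)*(kappa - s) - w)) ^ j"
    unfolding bp by (simp add: exp_of_nat_mult[symmetric] algebra_simps)
  finally show ?thesis unfolding n_def .
qed

lemma ennreal_ff: "ennreal (ff b w s j \<alpha>) = (\<Sum>m<2 ^ nn b w j. ennreal (hh b w j powr s) * indicator (Gs b w j m) \<alpha>)"
proof -
  have "ennreal (ff b w s j \<alpha>) = (\<Sum>m<2 ^ nn b w j. ennreal (indicator (Gs b w j m) \<alpha> * hh b w j powr s))"
    unfolding ff_def by (rule sum_ennreal[symmetric]) auto
  also have "\<dots> = (\<Sum>m<2 ^ nn b w j. ennreal (hh b w j powr s) * indicator (Gs b w j m) \<alpha>)"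
    by (intro sum.cong refl) (auto simp: indicator_def)
  finally show ?thesis .
qed

lemma int_ff:
  assumes b: "b \<ge> 2" and w: "w > -1" and s: "s \<ge> 0"
  shows "(\<integral>\<^sup>+\<alpha>. ennreal (ff b w s j \<alpha>) \<partial>lborel)
     \<le> ennreal (32 * (real b powr ((1+w)*(kappa - s) - w)) ^ j)"
proof -
  have "(\<integral>\<^sup>+\<alpha>. ennreal (ff b w s j \<alpha>) \<partial>lborel)
      = (\<Sum>m<2 ^ nn b w j. ennreal (hh b w j powr s) * emeasure lborel (Gs b w j m))"
  proof -
    have m: "\<And>m. Gs b w j m \<in> sets lborel" using Gs_sets by simp
    have "(\<integral>\<^sup>+\<alpha>. ennreal (ff b w s j \<alpha>) \<partial>lborel)
       = (\<Sum>m<2 ^ nn b w j. (\<integral>\<^sup>+\<alpha>. ennreal (hh b w j powr s) * indicator (Gs b w j m) \<alpha> \<partial>lborel))"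
      unfolding ennreal_ff
      by (rule nn_integral_sum) (rule borel_measurable_times_ennreal, simp, rule borel_measurable_indicator[OF m])
    also have "\<dots> = (\<Sum>m<2 ^ nn b w j. ennreal (hh b w j powr s) * emeasure lborel (Gs b w j m))"
      by (rule sum.cong[OF refl], rule nn_integral_cmult_indicator[OF m])
    finally show ?thesis .
  qed
  also have "\<dots> \<le> (\<Sum>m<(2::nat) ^ nn b w j. ennreal (hh b w j powr s) * ennreal (8 * rho b w j))"
    using b by (intro sum_mono mult_left_mono meas_Gs) auto
  also have "\<dots> = ennreal (real (2 ^ nn b w j) * hh b w j powr s * (8 * rho b w j))"
    using rho_pos[of b w j] b by (simp add: ennreal_mult[symmetric] ennreal_of_nat_eq_real_of_nat)
  also have "\<dots> \<le> ennreal (32 * (real b powr ((1+w)*(kappa - s) - w)) ^ j)"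
    by (intro ennreal_leI exp_bound[OF b w s])
  finally show ?thesis .
qed

lemma ff_meas: "(\<lambda>\<alpha>. ennreal (ff b w s j \<alpha>)) \<in> borel_measurable lborel"
proof -
  note Gs_sets[measurable]
  have "(\<lambda>\<alpha>. ff b w s j \<alpha>) \<in> borel_measurable borel" unfolding ff_def by measurable
  thus ?thesis by simp
qed

lemma AE_ff:
  assumes b: "b \<ge> 2" and w: "w > -1" and s: "s \<ge> 0" and e: "(1+w)*(kappa - s) - w < 0"
  shows "AE \<alpha> in lborel. (\<Sum>j. ennreal (ff b w s j \<alpha>)) \<noteq> \<infinity>"
proof (rule nn_integral_PInf_AE)
  show "(\<lambda>\<alpha>. \<Sum>j. ennreal (ff b w s j \<alpha>)) \<in> borel_measurable lborel"
    using ff_meas by measurable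
  define q where "q = real b powr ((1+w)*(kappa - s) - w)"
  have q: "0 \<le> q" "q < 1" unfolding q_def using b e by (auto simp: powr_less_one)
  have "(\<integral>\<^sup>+\<alpha>. (\<Sum>j. ennreal (ff b w s j \<alpha>)) \<partial>lborel) = (\<Sum>j. \<integral>\<^sup>+\<alpha>. ennreal (ff b w s j \<alpha>) \<partial>lborel)"
    using ff_meas by (rule nn_integral_suminf)
  also have "\<dots> \<le> (\<Sum>j. ennreal (32 * q ^ j))"
    unfolding q_def using b w s by (intro suminf_le int_ff) auto
  also have "\<dots> = ennreal (\<Sum>j. 32 * q ^ j)"
    using q by (intro suminf_ennreal2) (auto intro!: summable_mult summable_geometric)
  finally show "(\<integral>\<^sup>+\<alpha>. (\<Sum>j. ennreal (ff b w s j \<alpha>)) \<partial>lborel) \<noteq> \<infinity>"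
    by (auto simp: top_unique)
qed

lemma cantor_01: "x \<in> cantor_set \<Longrightarrow> 0 \<le> x \<and> x \<le> 1"
  using cantor_cover[of x 0] by auto

lemma rotate_mem:
  assumes a: "0 \<le> \<alpha>" "\<alpha> < 1" and xi: "\<xi> \<in> rotate \<alpha> cantorK"
  shows "\<exists>x\<in>cantor_set. \<exists>k::int. k \<in> {0,1} \<and> \<xi> = \<alpha> + x - of_int k"
proof -
  obtain x where x: "x \<in> cantor_set" and xe: "\<xi> = frac (\<alpha> + frac x)"
    using xi unfolding rotate_def cantorK_def by auto
  define k where "k = \<lfloor>x\<rfloor> + \<lfloor>\<alpha> + frac x\<rfloor>"
  have e: "\<xi> = \<alpha> + x - of_int k" unfolding xe k_def frac_def by simp
  have "0 \<le> \<xi>" "\<xi> < 1" unfolding xe by (auto simp: frac_lt_1)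
  moreover have "0 \<le> x" "x \<le> 1" using cantor_01[OF x] by auto
  ultimately have "of_int k > (-1::real)" "of_int k < (2::real)" using e a by linarith+
  hence "k \<in> {0,1}" by auto
  thus ?thesis using x e by blast
qed

lemma hit:
  assumes b: "b \<ge> 1" and a: "0 \<le> \<alpha>" "\<alpha> < 1" and xi: "\<xi> \<in> rotate \<alpha> cantorK"
    and d: "dist_int (real b ^ j * \<xi>) < real b powr (- w * real j)"
  shows "\<exists>m < 2 ^ nn b w j. \<alpha> \<in> Gs b w j m \<and>
    (\<exists>t\<in>{0,1::real}. \<xi> \<in> {\<alpha> + cpt (nn b w j) m - t .. \<alpha> + cpt (nn b w j) m - t + hh b w j})"
proof -
  obtain x k where x: "x \<in> cantor_set" and k: "k \<in> {0,1::int}" and e: "\<xi> = \<alpha> + x - of_int k"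
    using rotate_mem[OF a xi] by blast
  obtain m where m: "m < 2 ^ nn b w j" "cpt (nn b w j) m \<le> x" "x \<le> cpt (nn b w j) m + hh b w j"
    using cantor_cover[OF x, of "nn b w j"] unfolding hh_def by blast
  have eq: "real b ^ j * (\<alpha> + x) = real b ^ j * \<xi> + of_int (int (b ^ j) * k)"
    unfolding e by (simp add: algebra_simps)
  have "dist_int (real b ^ j * (\<alpha> + x)) = dist_int (real b ^ j * \<xi>)"
    by (simp only: eq dist_int_shift)
  hence "\<alpha> \<in> Gs b w j m" using mem_Gs[OF b a m(2,3)] d by simp
  moreover have "\<xi> \<in> {\<alpha> + cpt (nn b w j) m - of_int k .. \<alpha> + cpt (nn b w j) m - of_int k + hh b w j}"
    using e m by auto
  moreover have "(of_int k :: real) \<in> {0,1}" using k by auto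
  ultimately show ?thesis using m(1) by blast
qed

lemma vb_inf:
  assumes b: "b \<ge> 2" and v: "ereal w < vb b \<xi>"
  shows "infinite {j. dist_int (real b ^ j * \<xi>) < real b powr (- w * real j)}"
proof (cases "\<xi> \<in> \<rat>")
  case True
  hence "w < 0" using v unfolding vb_def by simp
  have "{j. dist_int (real b ^ j * \<xi>) < real b powr (- w * real j)} = UNIV"
  proof safe
    fix j :: nat
    have "1 \<le> real b powr (- w * real j)" using b \<open>w < 0\<close> by (intro ge_one_powr_ge_zero) (auto simp: mult_nonpos_nonneg)
    thus "dist_int (real b ^ j * \<xi>) < real b powr (- w * real j)" using dist_int_le_half[of "real b ^ j * \<xi>"] by linarith
  qed simp
  thus ?thesis by simp
next
  case False
  hence "ereal w < Sup {ereal v | v. infinite {j :: nat. dist_int (real b ^ j * \<xi>) < real b powr (- v * real j)}}"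
    using v unfolding vb_def by simp
  then obtain u where u: "w < u" "infinite {j :: nat. dist_int (real b ^ j * \<xi>) < real b powr (- u * real j)}"
    unfolding less_Sup_iff by auto
  have "{j :: nat. dist_int (real b ^ j * \<xi>) < real b powr (- u * real j)} \<subseteq> {j. dist_int (real b ^ j * \<xi>) < real b powr (- w * real j)}"
  proof safe
    fix j :: nat assume "dist_int (real b ^ j * \<xi>) < real b powr (- u * real j)"
    moreover have "real b powr (- u * real j) \<le> real b powr (- w * real j)"
      using b u(1) by (intro powr_mono) (auto intro: mult_right_mono)
    ultimately show "dist_int (real b ^ j * \<xi>) < real b powr (- w * real j)" by simp
  qed
  thus ?thesis using u(2) finite_subset by blast
qed

lemma vb_nonneg:
  assumes b: "b \<ge> 2" shows "0 \<le> vb b \<xi>"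
proof (cases "\<xi> \<in> \<rat>")
  case False
  have "{j :: nat. dist_int (real b ^ j * \<xi>) < real b powr (- 0 * real j)} = UNIV"
    using b dist_int_le_half by (auto intro: le_less_trans[of _ "1/2"])
  hence "ereal 0 \<in> {ereal v | v. infinite {j :: nat. dist_int (real b ^ j * \<xi>) < real b powr (- v * real j)}}"
    by auto
  hence "ereal 0 \<le> Sup {ereal v | v. infinite {j :: nat. dist_int (real b ^ j * \<xi>) < real b powr (- v * real j)}}"
    by (rule Sup_upper)
  thus ?thesis using False unfolding vb_def by (simp add: zero_ereal_def)
qed (simp add: vb_def)

definition Good :: "nat \<Rightarrow> real \<Rightarrow> bool" where
  "Good b \<alpha> \<longleftrightarrow> (\<forall>w s. w \<in> \<rat> \<longrightarrow> s \<in> \<rat> \<longrightarrow> -1 < w \<longrightarrow> 0 \<le> s \<longrightarrow> (1+w)*(kappa - s) - w < 0 \<longrightarrow>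
      (\<Sum>j. ennreal (ff b w s j \<alpha>)) \<noteq> \<infinity>)"

lemma AE_Good:
  assumes b: "b \<ge> 2" shows "AE \<alpha> in lborel. Good b \<alpha>"
proof -
  have "\<forall>q::rat \<times> rat. AE \<alpha> in lborel. (-1 < real_of_rat (fst q) \<and> 0 \<le> real_of_rat (snd q) \<and>
      (1 + real_of_rat (fst q)) * (kappa - real_of_rat (snd q)) - real_of_rat (fst q) < 0) \<longrightarrow>
      (\<Sum>j. ennreal (ff b (real_of_rat (fst q)) (real_of_rat (snd q)) j \<alpha>)) \<noteq> \<infinity>"
  proof
    fix q :: "rat \<times> rat"
    show "AE \<alpha> in lborel. (-1 < real_of_rat (fst q) \<and> 0 \<le> real_of_rat (snd q) \<and>
      (1 + real_of_rat (fst q)) * (kappa - real_of_rat (snd q)) - real_of_rat (fst q) < 0) \<longrightarrow>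
      (\<Sum>j. ennreal (ff b (real_of_rat (fst q)) (real_of_rat (snd q)) j \<alpha>)) \<noteq> \<infinity>"
    proof (cases "-1 < (real_of_rat (fst q)::real) \<and> 0 \<le> (real_of_rat (snd q)::real) \<and>
      (1 + real_of_rat (fst q)) * (kappa - real_of_rat (snd q)) - real_of_rat (fst q) < 0")
      case True thus ?thesis using AE_ff[OF b, of "real_of_rat (fst q)" "real_of_rat (snd q)"] by simp
    next
      case False thus ?thesis by (intro AE_I2) blast
    qed
  qed
  hence "AE \<alpha> in lborel. \<forall>q::rat \<times> rat. (-1 < real_of_rat (fst q) \<and> 0 \<le> real_of_rat (snd q) \<and>
      (1 + real_of_rat (fst q)) * (kappa - real_of_rat (snd q)) - real_of_rat (fst q) < 0) \<longrightarrow>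
      (\<Sum>j. ennreal (ff b (real_of_rat (fst q)) (real_of_rat (snd q)) j \<alpha>)) \<noteq> \<infinity>"
    by (subst AE_all_countable)
  thus ?thesis
  proof (rule AE_mp, intro AE_I2 impI)
    fix \<alpha> assume H: "\<forall>q::rat \<times> rat. (-1 < real_of_rat (fst q) \<and> 0 \<le> real_of_rat (snd q) \<and>
      (1 + real_of_rat (fst q)) * (kappa - real_of_rat (snd q)) - real_of_rat (fst q) < 0) \<longrightarrow>
      (\<Sum>j. ennreal (ff b (real_of_rat (fst q)) (real_of_rat (snd q)) j \<alpha>)) \<noteq> \<infinity>"
    show "Good b \<alpha>" unfolding Good_def
    proof (intro allI impI)
      fix w s :: real assume "w \<in> \<rat>" "s \<in> \<rat>" and c: "-1 < w" "0 \<le> s" "(1+w)*(kappa - s) - w < 0"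
      then obtain w' s' where "w = of_rat w'" "s = of_rat s'" by (auto elim!: Rats_cases)
      thus "(\<Sum>j. ennreal (ff b w s j \<alpha>)) \<noteq> \<infinity>" using H[rule_format, of "(w', s')"] c by simp
    qed
  qed
qed

lemma Good_summable:
  assumes "Good b \<alpha>" "w \<in> \<rat>" "s \<in> \<rat>" "-1 < w" "0 \<le> s" "(1+w)*(kappa - s) - w < 0"
  shows "summable (\<lambda>j. ff b w s j \<alpha>)"
  using assms unfolding Good_def by (intro summable_suminf_not_top ff_nonneg) auto

lemma partA:
  assumes b: "b \<ge> 2" and a: "0 \<le> \<alpha>" "\<alpha> < 1" and G: "Good b \<alpha>" and xi: "\<xi> \<in> rotate \<alpha> cantorK"
  shows "vb b \<xi> \<le> ereal (kappa / (1 - kappa))"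
proof (rule ccontr)
  define c0 where "c0 = kappa / (1 - kappa)"
  have k: "0 < kappa" "kappa < 1" by (rule kappa_bounds)+
  have c0: "c0 > 0" unfolding c0_def using k by simp
  assume "\<not> vb b \<xi> \<le> ereal (kappa / (1 - kappa))"
  hence "ereal c0 < vb b \<xi>" unfolding c0_def by simp
  then obtain u where u: "c0 < u" "ereal u < vb b \<xi>" using ereal_dense2 by (metis ereal_less(2) less_ereal.simps(1) order_less_trans)
  obtain w where w: "w \<in> \<rat>" "c0 < w" "w < u" using Rats_dense_in_real[OF u(1)] by blast
  have inf: "infinite {j. dist_int (real b ^ j * \<xi>) < real b powr (- w * real j)}"
    using u(2) w(3) by (intro vb_inf[OF b]) (metis less_ereal.simps(1) order_less_trans)
  have e: "(1+w)*(kappa - 0) - w < 0"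
  proof -
    have "kappa < w * (1 - kappa)" using w(2) k unfolding c0_def by (simp add: divide_less_eq)
    thus ?thesis by (simp add: algebra_simps)
  qed
  have sm: "summable (\<lambda>j. ff b w 0 j \<alpha>)"
    using Good_summable[OF G w(1) _ _ _ e] c0 w(2) by auto
  hence "(\<lambda>j. ff b w 0 j \<alpha>) \<longlonglongrightarrow> 0" by (rule summable_LIMSEQ_zero)
  then obtain N where N: "\<And>j. j \<ge> N \<Longrightarrow> ff b w 0 j \<alpha> < 1"
    using LIMSEQ_D[of _ 0 1] by (metis ff_nonneg abs_of_nonneg diff_zero real_norm_def zero_less_one)
  obtain j where j: "j \<ge> N" "dist_int (real b ^ j * \<xi>) < real b powr (- w * real j)"
    using inf by (metis (mono_tags, lifting) infinite_nat_iff_unbounded_le mem_Collect_eq)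
  obtain m where m: "m < 2 ^ nn b w j" "\<alpha> \<in> Gs b w j m"
    using hit[OF _ a xi j(2)] b by auto
  have "1 = indicator (Gs b w j m) \<alpha> * hh b w j powr 0" using m(2) hh_pos[of b w j] by simp
  also have "\<dots> \<le> ff b w 0 j \<alpha>" unfolding ff_def
    by (rule member_le_sum[of m "{..<2 ^ nn b w j}" "\<lambda>m. indicator (Gs b w j m) \<alpha> * hh b w j powr 0"])
       (use m(1) in auto)
  finally show False using N[OF j(1)] by simp
qed

lemma double_sum:
  fixes g :: "nat \<times> nat \<Rightarrow> ennreal"
  shows "(\<Sum>i. g (prod_decode i)) = (\<Sum>j. \<Sum>k. g (j, k))"
proof -
  have "(\<Sum>i. g (prod_decode i)) = (\<integral>\<^sup>+i. g (prod_decode i) \<partial>count_space UNIV)"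
    by (simp add: nn_integral_count_space_nat)
  also have "\<dots> = (\<integral>\<^sup>+x. g x \<partial>count_space UNIV)"
    by (rule nn_integral_bij_count_space) (rule bij_prod_decode)
  also have "\<dots> = (\<integral>\<^sup>+ j. \<integral>\<^sup>+ k. g (j, k) \<partial>count_space UNIV \<partial>count_space UNIV)"
    by (rule nn_integral_fst_count_space[symmetric])
  also have "\<dots> = (\<Sum>j. \<Sum>k. g (j, k))"
    by (simp add: nn_integral_count_space_nat)
  finally show ?thesis .
qed

lemma sum_div2:
  fixes N :: nat and \<phi> :: "nat \<Rightarrow> real"
  shows "(\<Sum>k<2*N. \<phi> (k div 2)) = 2 * (\<Sum>m<N. \<phi> m)"
proof (induction N)
  case (Suc N)
  have "{..<2 * Suc N} = insert (2*N+1) (insert (2*N) {..<2*N})" by auto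
  hence "(\<Sum>k<2 * Suc N. \<phi> (k div 2)) = \<phi> ((2*N+1) div 2) + (\<phi> ((2*N) div 2) + (\<Sum>k<2*N. \<phi> (k div 2)))"
    by simp
  also have "\<dots> = 2 * (\<Sum>m<Suc N. \<phi> m)" using Suc by simp
  finally show ?case .
qed simp

lemma hh_le:
  assumes b: "b \<ge> 2" and w: "w > -1"
  shows "hh b w j \<le> (real b powr (-(1+w))) ^ j"
proof -
  define lb where "lb = ln (real b)"
  have lb: "lb > 0" unfolding lb_def using b by simp
  have l3: "ln (3::real) > 0" by simp
  define t where "t = (1+w) * lb / ln 3 * real j"
  have t0: "t \<ge> 0" unfolding t_def using w lb by simp
  define n where "n = nn b w j"
  have e: "real n = of_int \<lceil>t\<rceil>"
    unfolding n_def nn_def t_def[symmetric] lb_def[symmetric] using t0 by simp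
  have nt: "real n \<ge> t" unfolding e using ceiling_correct[of t] by linarith
  have "exp (real n * ln 3) = (3::real) ^ n" by (simp add: exp_of_nat_mult)
  hence hh: "hh b w j = exp (- real n * ln 3)"
    unfolding hh_def n_def[symmetric] by (simp add: exp_minus power_divide inverse_eq_divide)
  have "- real n * ln 3 \<le> - t * ln 3" using nt l3 by (intro mult_right_mono) auto
  also have "- t * ln 3 = real j * (- (1+w) * lb)" unfolding t_def using l3 by (simp add: field_simps)
  finally have "hh b w j \<le> exp (real j * (- (1+w) * lb))" unfolding hh by simp
  also have "\<dots> = (real b powr (-(1+w))) ^ j"
    unfolding lb_def powr_def using b by (simp add: exp_of_nat_mult)
  finally show ?thesis .
qed

lemma H0:
  assumes b: "b \<ge> 2" and a: "0 \<le> \<alpha>" "\<alpha> < 1" and G: "Good b \<alpha>"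
    and w: "w \<in> \<rat>" "-1 < w" and s: "s \<in> \<rat>" "0 < s" and e: "(1+w)*(kappa - s) - w < 0"
    and E: "E \<subseteq> rotate \<alpha> cantorK"
    and inf: "\<And>\<xi>. \<xi> \<in> E \<Longrightarrow> infinite {j. dist_int (real b ^ j * \<xi>) < real b powr (- w * real j)}"
  shows "hausdorff_measure s E = 0"
proof -
  have sm: "summable (\<lambda>j. ff b w s j \<alpha>)" using Good_summable[OF G w(1) s(1) w(2) _ e] s by simp
  have pre: "hausdorff_pre s \<delta> E = 0" if d: "\<delta> > 0" for \<delta>
  proof (rule antisym[OF ennreal_le_epsilon zero_le])
    fix \<epsilon> :: real assume ep: "0 < \<epsilon>"
    obtain N1 where N1: "\<forall>n\<ge>N1. norm (\<Sum>i. ff b w s (i+n) \<alpha>) < \<epsilon>/2"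
      using suminf_exist_split[OF _ sm, of "\<epsilon>/2"] ep by auto
    define r where "r = real b powr (-(1+w))"
    have r: "0 < r" "r < 1" using b w by (auto simp: r_def powr_less_one)
    obtain N2 where N2: "r ^ N2 < \<delta>" using real_arch_pow_inv[OF d r(2)] by blast
    define J where "J = max N1 N2"
    define V where "V = (\<lambda>(j,k).
        if k < 2 * 2 ^ nn b w (j+J) \<and> \<alpha> \<in> Gs b w (j+J) (k div 2)
        then {\<alpha> + cpt (nn b w (j+J)) (k div 2) - real (k mod 2) .. \<alpha> + cpt (nn b w (j+J)) (k div 2) - real (k mod 2) + hh b w (j+J)}
        else {})"
    define U where "U = (\<lambda>i. V (prod_decode i))"
    have cover: "E \<subseteq> (\<Union>i. U i)"
    proof
      fix \<xi> assume xi: "\<xi> \<in> E"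
      obtain jj where jj: "jj \<ge> J" "dist_int (real b ^ jj * \<xi>) < real b powr (- w * real jj)"
        using inf[OF xi] by (metis (mono_tags, lifting) infinite_nat_iff_unbounded_le mem_Collect_eq)
      obtain m t where m: "m < 2 ^ nn b w jj" "\<alpha> \<in> Gs b w jj m" and t: "t \<in> {0,1::real}"
        and xt: "\<xi> \<in> {\<alpha> + cpt (nn b w jj) m - t .. \<alpha> + cpt (nn b w jj) m - t + hh b w jj}"
      proof -
        have "\<xi> \<in> rotate \<alpha> cantorK" using xi E by auto
        have "1 \<le> b" using b by simp
        from hit[OF this a \<open>\<xi> \<in> rotate \<alpha> cantorK\<close> jj(2)] show ?thesis using that by blast
      qed
      define k where "k = 2*m + (if t = 1 then 1 else 0)"
      have k: "k div 2 = m" "real (k mod 2) = t" "k < 2 * 2 ^ nn b w jj"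
        using t m(1) unfolding k_def by auto
      have jJ: "jj - J + J = jj" using jj(1) by simp
      have "\<xi> \<in> V (jj - J, k)" unfolding V_def using k m(2) xt jJ by simp
      hence "\<xi> \<in> U (prod_encode (jj - J, k))" unfolding U_def by simp
      thus "\<xi> \<in> (\<Union>i. U i)" by blast
    qed
    have bd: "\<forall>i. bounded (U i) \<and> diameter (U i) \<le> \<delta>"
    proof
      fix i
      obtain j k where i: "prod_decode i = (j, k)" by (cases "prod_decode i")
      have "hh b w (j+J) \<le> r ^ (j+J)" unfolding r_def by (rule hh_le[OF b w(2)])
      also have "\<dots> \<le> r ^ N2" using r J_def by (intro power_decreasing) auto
      finally have "hh b w (j+J) \<le> \<delta>" using N2 by simp
      hence hd: "hh b w (j+J) \<le> \<delta>" .
      show "bounded (U i) \<and> diameter (U i) \<le> \<delta>"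
      proof (cases "k < 2 * 2 ^ nn b w (j+J) \<and> \<alpha> \<in> Gs b w (j+J) (k div 2)")
        case True
        define a0 where "a0 = \<alpha> + cpt (nn b w (j+J)) (k div 2) - real (k mod 2)"
        have "U i = {a0 .. a0 + hh b w (j+J)}" unfolding U_def i V_def a0_def prod.case by (rule if_P[OF True])
        thus ?thesis using hh_pos[of b w "j+J"] hd by simp
      next
        case False
        have "U i = {}" unfolding U_def i V_def by (simp only: prod.case False if_False)
        thus ?thesis using d by simp
      qed
    qed
    have inner: "(\<Sum>k. ennreal (diameter (V (j, k)) powr s)) = ennreal (2 * ff b w s (j+J) \<alpha>)" for j
    proof -
      define M :: nat where "M = 2 * 2 ^ nn b w (j+J)"
      define \<phi> where "\<phi> = (\<lambda>m. indicator (Gs b w (j+J) m) \<alpha> * hh b w (j+J) powr s)"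
      have dk: "ennreal (diameter (V (j, k)) powr s) = (if k < M then ennreal (\<phi> (k div 2)) else 0)" for k
      proof (cases "k < M \<and> \<alpha> \<in> Gs b w (j+J) (k div 2)")
        case True
        define a0 where "a0 = \<alpha> + cpt (nn b w (j+J)) (k div 2) - real (k mod 2)"
        have T: "k < 2 * 2 ^ nn b w (j+J) \<and> \<alpha> \<in> Gs b w (j+J) (k div 2)" using True unfolding M_def .
        have "V (j, k) = {a0 .. a0 + hh b w (j+J)}" unfolding V_def a0_def prod.case by (rule if_P[OF T])
        hence dd: "diameter (V (j, k)) = hh b w (j+J)" using hh_pos[of b w "j+J"] by simp
        have kM: "k < M" using True by blast
        have ind: "indicator (Gs b w (j+J) (k div 2)) \<alpha> = (1::real)"
          using True by (intro indicator_simps(1)) blast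
        show ?thesis unfolding \<phi>_def if_P[OF kM] ind dd by simp
      next
        case False
        hence nc: "\<not> (k < 2 * 2 ^ nn b w (j+J) \<and> \<alpha> \<in> Gs b w (j+J) (k div 2))" unfolding M_def .
        have "V (j, k) = {}" unfolding V_def by (simp only: prod.case nc if_False)
        hence d0: "diameter (V (j, k)) powr s = 0" by (simp only: diameter_empty powr_0)
        show ?thesis
        proof (cases "k < M")
          case kM: True
          hence "\<alpha> \<notin> Gs b w (j+J) (k div 2)" using nc unfolding M_def by blast
          hence "indicator (Gs b w (j+J) (k div 2)) \<alpha> = (0::real)" by (rule indicator_simps(2))
          thus ?thesis unfolding \<phi>_def if_P[OF kM] d0 by simp
        next
          case kM: False
          show ?thesis unfolding if_not_P[OF kM] d0 by simp
        qed
      qed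
      have "(\<Sum>k. ennreal (diameter (V (j, k)) powr s)) = (\<Sum>k. if k < M then ennreal (\<phi> (k div 2)) else 0)"
        unfolding dk ..
      also have "\<dots> = (\<Sum>k\<in>{..<M}. if k < M then ennreal (\<phi> (k div 2)) else 0)"
        by (rule suminf_finite) simp_all
      also have "\<dots> = (\<Sum>k<M. ennreal (\<phi> (k div 2)))" by (rule sum.cong) simp_all
      also have "\<dots> = ennreal (\<Sum>k<M. \<phi> (k div 2))" by (rule sum_ennreal) (simp add: \<phi>_def)
      also have "(\<Sum>k<M. \<phi> (k div 2)) = 2 * ff b w s (j+J) \<alpha>"
        unfolding M_def ff_def \<phi>_def by (rule sum_div2)
      finally show ?thesis .
    qed
    have "(\<Sum>i. ennreal (diameter (U i) powr s)) = (\<Sum>j. \<Sum>k. ennreal (diameter (V (j, k)) powr s))"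
      unfolding U_def by (rule double_sum[of "\<lambda>x. ennreal (diameter (V x) powr s)"])
    also have "\<dots> = (\<Sum>j. ennreal (2 * ff b w s (j+J) \<alpha>))" unfolding inner ..
    also have "\<dots> = ennreal (\<Sum>j. 2 * ff b w s (j+J) \<alpha>)"
      by (rule suminf_ennreal2) (auto intro!: ff_nonneg summable_mult summable_ignore_initial_segment[OF sm])
    also have "(\<Sum>j. 2 * ff b w s (j+J) \<alpha>) = 2 * (\<Sum>j. ff b w s (j+J) \<alpha>)"
      by (rule suminf_mult) (rule summable_ignore_initial_segment[OF sm])
    finally have eqs: "(\<Sum>i. ennreal (diameter (U i) powr s)) = ennreal (2 * (\<Sum>j. ff b w s (j+J) \<alpha>))" .
    have "2 * (\<Sum>j. ff b w s (j+J) \<alpha>) \<le> \<epsilon>"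
    proof -
      have "norm (\<Sum>i. ff b w s (i+J) \<alpha>) < \<epsilon>/2" using N1 J_def by auto
      thus ?thesis by simp
    qed
    hence le: "(\<Sum>i. ennreal (diameter (U i) powr s)) \<le> ennreal \<epsilon>" unfolding eqs by (rule ennreal_leI)
    have mem: "(\<Sum>i. ennreal (diameter (U i) powr s)) \<in> {(\<Sum>i. ennreal (diameter (U' i) powr s)) | U' :: nat \<Rightarrow> real set.
       E \<subseteq> (\<Union>i. U' i) \<and> (\<forall>i. bounded (U' i) \<and> diameter (U' i) \<le> \<delta>)}"
      unfolding mem_Collect_eq by (intro exI[of _ U] conjI refl cover bd)
    have "hausdorff_pre s \<delta> E \<le> ennreal \<epsilon>"
      unfolding hausdorff_pre_def by (rule Inf_lower2[OF mem le])
    thus "hausdorff_pre s \<delta> E \<le> 0 + ennreal \<epsilon>" by simp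
  qed
  have "(SUP \<delta>\<in>{0<..}. hausdorff_pre s \<delta> E) = (SUP \<delta>\<in>{(0::real)<..}. (0::ennreal))"
    by (rule SUP_cong[OF refl]) (rule pre, simp)
  thus ?thesis unfolding hausdorff_measure_def by simp
qed

lemma partB:
  assumes b: "b \<ge> 2" and a: "0 \<le> \<alpha>" "\<alpha> < 1" and G: "Good b \<alpha>"
    and v: "0 \<le> v" "v \<le> kappa / (1 - kappa)"
  shows "hausdorff_dim (Vb b v \<inter> rotate \<alpha> cantorK) \<le> ereal (1 / (v + 1) + kappa - 1)"
proof -
  define E where "E = Vb b v \<inter> rotate \<alpha> cantorK"
  define c where "c = 1 / (v + 1) + kappa - 1"
  have k: "0 < kappa" "kappa < 1" by (rule kappa_bounds)+
  have c0: "c \<ge> 0"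
  proof -
    have "(1 - kappa) * (v + 1) \<le> (1 - kappa) * (kappa / (1 - kappa) + 1)"
      using v k by (intro mult_left_mono) auto
    also have "\<dots> = 1" using k by (simp add: field_simps)
    finally have "1 - kappa \<le> 1 / (v + 1)" using v by (simp add: field_simps)
    thus ?thesis unfolding c_def by simp
  qed
  have "hausdorff_dim E \<le> ereal c"
  proof (cases "E = {}")
    case True thus ?thesis unfolding hausdorff_dim_def by simp
  next
    case False
    have "Inf {ereal s | s. 0 < s \<and> hausdorff_measure s E = 0} \<le> ereal c"
      unfolding Inf_le_iff
    proof (intro allI impI)
      fix y assume y: "ereal c < y"
      obtain t where t: "ereal c < ereal t" "ereal t < y" using ereal_dense2[OF y] by blast
      obtain s where s: "s \<in> \<rat>" "c < s" "s < t" using Rats_dense_in_real[of c t] t(1) by auto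
      have s0: "0 < s" using s c0 by simp
      have q: "1 / (v + 1) < s - kappa + 1" using s(2) unfolding c_def by simp
      have q0: "0 < s - kappa + 1" using q v by (smt (verit) divide_pos_pos)
      have "1 / (s - kappa + 1) < v + 1"
        using q q0 v by (simp add: field_simps divide_less_eq less_divide_eq)
      hence "1 / (s - kappa + 1) - 1 < v" by simp
      then obtain w where w: "w \<in> \<rat>" "1 / (s - kappa + 1) - 1 < w" "w < v"
        using Rats_dense_in_real by blast
      have w1: "-1 < w" using w(2) q0 by (smt (verit) divide_pos_pos)
      have e: "(1+w)*(kappa - s) - w < 0"
      proof -
        have "1 / (s - kappa + 1) < 1 + w" using w(2) by simp
        hence "1 < (1 + w) * (s - kappa + 1)" using q0 by (simp add: divide_less_eq)
        thus ?thesis by (simp add: algebra_simps)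
      qed
      have "hausdorff_measure s E = 0"
      proof (rule H0[OF b a G w(1) w1 s(1) s0 e])
        show "E \<subseteq> rotate \<alpha> cantorK" unfolding E_def by auto
        fix \<xi> assume "\<xi> \<in> E"
        hence "ereal v \<le> vb b \<xi>" unfolding E_def Vb_def by auto
        hence "ereal w < vb b \<xi>" using w(3) by (metis less_ereal.simps(1) order_less_le_trans)
        thus "infinite {j. dist_int (real b ^ j * \<xi>) < real b powr (- w * real j)}" by (rule vb_inf[OF b])
      qed
      hence "ereal s \<in> {ereal s | s. 0 < s \<and> hausdorff_measure s E = 0}" using s0 by auto
      moreover have "ereal s < y" using s(3) t(2) by (metis less_ereal.simps(1) order_less_trans)
      ultimately show "\<exists>a\<in>{ereal s | s. 0 < s \<and> hausdorff_measure s E = 0}. a < y" by blast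
    qed
    thus ?thesis unfolding hausdorff_dim_def using False by simp
  qed
  thus ?thesis unfolding E_def c_def .
qed

theorem theorem2p3:
  fixes b :: nat
  assumes "b \<ge> 2"
  shows "AE \<alpha> in lborel. \<alpha> \<in> circle \<longrightarrow>
    ((\<forall>\<xi> \<in> rotate \<alpha> cantorK. 0 \<le> vb b \<xi> \<and> vb b \<xi> \<le> ereal (kappa / (1 - kappa))) \<and>
     (\<forall>v::real. 0 \<le> v \<and> v \<le> kappa / (1 - kappa) \<longrightarrow>
        hausdorff_dim (Vb b v \<inter> rotate \<alpha> cantorK) \<le> ereal (1 / (v + 1) + kappa - 1)))"
  using AE_Good[OF assms]
proof (rule AE_mp, intro AE_I2 impI conjI ballI allI)
  fix \<alpha> assume G: "Good b \<alpha>" and c: "\<alpha> \<in> circle"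
  have a: "0 \<le> \<alpha>" "\<alpha> < 1" using c unfolding circle_def by auto
  fix \<xi> assume xi: "\<xi> \<in> rotate \<alpha> cantorK"
  show "0 \<le> vb b \<xi>" by (rule vb_nonneg[OF assms])
  show "vb b \<xi> \<le> ereal (kappa / (1 - kappa))" by (rule partA[OF assms a G xi])
next
  fix \<alpha> v assume G: "Good b \<alpha>" and c: "\<alpha> \<in> circle" and v: "0 \<le> v \<and> v \<le> kappa / (1 - kappa)"
  have a: "0 \<le> \<alpha>" "\<alpha> < 1" using c unfolding circle_def by auto
  show "hausdorff_dim (Vb b v \<inter> rotate \<alpha> cantorK) \<le> ereal (1 / (v + 1) + kappa - 1)"
    using partB[OF assms a G] v by auto
qed

end
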